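(* For every implication of canonical form $(\ast)$ and every environment $\eta$ of ordinary variables, if the Parametricity Condition holds for the implication and $\eta$, then the implication is binary $\eta$-valid, i.e. $\bigwedge_i\varphi_i*a_{i,1}*\cdots*a_{i,M_i}\models^2_\eta\bigvee_j\psi_j*b_{j,1}*\cdots*b_{j,N_j}$.
   Context: $\mathsf{Heap}$: finite partial functions $\mathsf{PosInt}\to\mathsf{Int}$; $g\sqsubseteq h$ means $h$ extends $g$; $h\cdot g$ is union of disjoint heaps; componentwise on $\mathsf{Heap}^n$. $\mathsf{IRel}_n$: upward closed subsets of $\mathsf{Heap}^n$; $p*q=\{\mathbf f\cdot\mathbf g\mid\mathbf f\in p,\mathbf g\in q,\text{componentwise disjoint}\}$. $\Delta_n(X)=\{(h_1,\dots,h_n)\mid\exists f\in X.\ \forall k.\ f\sqsubseteq h_k\}$ for $X\subseteq\mathsf{Heap}$. Assertions: built from primitive assertions $P$ (e.g. $E\hookrightarrow F$), assertion variables, $\mathsf{true},\mathsf{false},\wedge,\vee,*$, quantifiers over integer variables. $n$-ary meaning under $\eta$ (ordinary variables to integers) and $\rho:\mathsf{AVar}\to\mathsf{IRel}_n$: $[\![P]\!]^n=\Delta_n([\![P]\!]^{\mathrm{prim}}_\eta)$ with $[\![P]\!]^{\mathrm{prim}}_\eta\subseteq\mathsf{Heap}$ the standard meaning, $[\![a]\!]^n=\rho(a)$, connectives by $\mathsf{Heap}^n,\emptyset,\cap,\cup,*$, unions/intersections over integer values. $\varphi\models^n_\eta\psi$ ($n$-ary $\eta$-validity) means $[\![\varphi]\!]^n_{\eta,\rho}\subseteq[\![\psi]\!]^n_{\eta,\rho}$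 for all $\rho:\mathsf{AVar}\to\mathsf{IRel}_n$. Canonical form $(\ast)$: $\bigwedge_{i=1}^M\varphi_i*a_{i,1}*\cdots*a_{i,M_i}\Rightarrow\bigvee_{j=1}^N\psi_j*b_{j,1}*\cdots*b_{j,N_j}$ with $M\ge1$, $N\ge0$, $\varphi_i,\psi_j$ free of assertion variables (so their meanings do not depend on $\rho$; write $[\![\varphi_i]\!]^1_\eta$), and every $b_{j,k}$ occurring among the $a_{i,k}$. Let $V=\{a_{i,k}\}$, $\Pi(i)(c)=|\{k\mid a_{i,k}=c\}|$, $\Omega(j)(c)=|\{k\mid b_{j,k}=c\}|$ for $c\in V$; $\Pi(i)\ge\Omega(j)$ means $\Pi(i)(c)\ge\Omega(j)(c)$ for all $c\in V$. Disjunct $j$ is empty if $N_j=0$. Parametricity Condition (PC) for the implication and $\eta$: for all $h,h_1,\dots,h_M\in\mathsf{Heap}$ with $h_i\sqsubseteq h$ and $h_i\in[\![\varphi_i]\!]^1_\eta$ for all $i$, at least one of: (1) there are $i,j$ with $h_i\in[\![\psi_j]\!]^1_\eta$ and $\Pi(i)\ge\Omega(j)$; (2) there is $j$ with disjunct $j$ empty and $h\in[\![\psi_j]\!]^1_\eta$. *)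

theory Defs
  imports Main
begin

text \<open>Heaps: finite partial functions from positive integers to integers.
  h \<sqsubseteq> g is map_le; h\<cdot>g is map_add of disjoint heaps.\<close>

type_synonym heap = "int \<rightharpoonup> int"

definition heaps :: "heap set" where
  "heaps = {h. finite (dom h) \<and> dom h \<subseteq> {0<..}}"

text \<open>Heap^n as lists of heaps of length n (componentwise order/union).\<close>

definition tuples :: "nat \<Rightarrow> heap list set" where
  "tuples n = {hs. length hs = n \<and> set hs \<subseteq> heaps}"

definition IRel :: "nat \<Rightarrow> heap list set set" where
  "IRel n = {R. R \<subseteq> tuples n \<and>
      (\<forall>hs\<in>R. \<forall>gs\<in>tuples n. list_all2 map_le hs gs \<longrightarrow> gs \<in> R)}"

definition sepstar :: "heap list set \<Rightarrow> heap list set \<Rightarrow> heap list set" where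
  "sepstar p q = {map2 (++) fs gs | fs gs. fs \<in> p \<and> gs \<in> q \<and>
      list_all2 (\<lambda>f g. dom f \<inter> dom g = {}) fs gs}"

definition Delta :: "nat \<Rightarrow> heap set \<Rightarrow> heap list set" where
  "Delta n X = {hs \<in> tuples n. \<exists>f\<in>X. \<forall>h\<in>set hs. f \<subseteq>\<^sub>m h}"

text \<open>'p: primitive assertions, 'v: ordinary (integer) variables, 'a: assertion variables.\<close>

datatype ('p, 'v, 'a) assn =
    Prim 'p
  | AV 'a
  | TT
  | FF
  | Conj "('p, 'v, 'a) assn" "('p, 'v, 'a) assn"
  | Disj "('p, 'v, 'a) assn" "('p, 'v, 'a) assn"
  | Star "('p, 'v, 'a) assn" "('p, 'v, 'a) assn"
  | Ex 'v "('p, 'v, 'a) assn"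
  | All 'v "('p, 'v, 'a) assn"

text \<open>n-ary semantics; P gives the standard (unary, primitive) meaning of primitive assertions.\<close>

fun sem :: "('p \<Rightarrow> ('v \<Rightarrow> int) \<Rightarrow> heap set) \<Rightarrow> nat \<Rightarrow> ('p, 'v, 'a) assn
             \<Rightarrow> ('v \<Rightarrow> int) \<Rightarrow> ('a \<Rightarrow> heap list set) \<Rightarrow> heap list set" where
  "sem P n (Prim p) \<eta> \<rho> = Delta n (P p \<eta>)"
| "sem P n (AV a) \<eta> \<rho> = \<rho> a"
| "sem P n TT \<eta> \<rho> = tuples n"
| "sem P n FF \<eta> \<rho> = {}"
| "sem P n (Conj x y) \<eta> \<rho> = sem P n x \<eta> \<rho> \<inter> sem P n y \<eta> \<rho>"
| "sem P n (Disj x y) \<eta> \<rho> = sem P n x \<eta> \<rho> \<union> sem P n y \<eta> \<rho>"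
| "sem P n (Star x y) \<eta> \<rho> = sepstar (sem P n x \<eta> \<rho>) (sem P n y \<eta> \<rho>)"
| "sem P n (Ex v x) \<eta> \<rho> = (\<Union>k. sem P n x (\<eta>(v := k)) \<rho>)"
| "sem P n (All v x) \<eta> \<rho> = (\<Inter>k. sem P n x (\<eta>(v := k)) \<rho>)"

definition valid :: "('p \<Rightarrow> ('v \<Rightarrow> int) \<Rightarrow> heap set) \<Rightarrow> nat \<Rightarrow> ('p, 'v, 'a) assn
                      \<Rightarrow> ('p, 'v, 'a) assn \<Rightarrow> ('v \<Rightarrow> int) \<Rightarrow> bool" where
  "valid P n \<phi> \<psi> \<eta> \<longleftrightarrow>
     (\<forall>\<rho>. (\<forall>a. \<rho> a \<in> IRel n) \<longrightarrow> sem P n \<phi> \<eta> \<rho> \<subseteq> sem P n \<psi> \<eta> \<rho>)"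

fun avfree :: "('p, 'v, 'a) assn \<Rightarrow> bool" where
  "avfree (Prim p) = True"
| "avfree (AV a) = False"
| "avfree TT = True"
| "avfree FF = True"
| "avfree (Conj x y) = (avfree x \<and> avfree y)"
| "avfree (Disj x y) = (avfree x \<and> avfree y)"
| "avfree (Star x y) = (avfree x \<and> avfree y)"
| "avfree (Ex v x) = avfree x"
| "avfree (All v x) = avfree x"

text \<open>Unary meaning of an assertion-variable-free assertion, as a set of heaps
  (independent of \<rho>; we take the empty valuation, which is in IRel 1).\<close>

definition sem1 :: "('p \<Rightarrow> ('v \<Rightarrow> int) \<Rightarrow> heap set) \<Rightarrow> ('p, 'v, 'a) assn
                     \<Rightarrow> ('v \<Rightarrow> int) \<Rightarrow> heap set" where
  "sem1 P \<phi> \<eta> = {h. [h] \<in> sem P 1 \<phi> \<eta> (\<lambda>_. {})}"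

text \<open>A conjunct/disjunct is a pair (phi, [a1,...,ak]) standing for phi * a1 * ... * ak.\<close>

definition starred :: "('p, 'v, 'a) assn \<times> 'a list \<Rightarrow> ('p, 'v, 'a) assn" where
  "starred c = foldl (\<lambda>x a. Star x (AV a)) (fst c) (snd c)"

fun conjs :: "('p, 'v, 'a) assn list \<Rightarrow> ('p, 'v, 'a) assn" where
  "conjs [] = TT"
| "conjs [x] = x"
| "conjs (x # xs) = Conj x (conjs xs)"

fun disjs :: "('p, 'v, 'a) assn list \<Rightarrow> ('p, 'v, 'a) assn" where
  "disjs [] = FF"
| "disjs [x] = x"
| "disjs (x # xs) = Disj x (disjs xs)"

definition canonical :: "(('p, 'v, 'a) assn \<times> 'a list) list
                          \<Rightarrow> (('p, 'v, 'a) assn \<times> 'a list) list \<Rightarrow> bool" where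
  "canonical L R \<longleftrightarrow> L \<noteq> [] \<and> (\<forall>c\<in>set L. avfree (fst c)) \<and>
     (\<forall>d\<in>set R. avfree (fst d) \<and> set (snd d) \<subseteq> (\<Union>c\<in>set L. set (snd c)))"

definition mult_ge :: "'a list \<Rightarrow> 'a list \<Rightarrow> 'a set \<Rightarrow> bool" where
  "mult_ge as bs V \<longleftrightarrow> (\<forall>c\<in>V. count_list bs c \<le> count_list as c)"

definition PC :: "('p \<Rightarrow> ('v \<Rightarrow> int) \<Rightarrow> heap set) \<Rightarrow> (('p, 'v, 'a) assn \<times> 'a list) list
                   \<Rightarrow> (('p, 'v, 'a) assn \<times> 'a list) list \<Rightarrow> ('v \<Rightarrow> int) \<Rightarrow> bool" where
  "PC P L R \<eta> \<longleftrightarrow>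
    (\<forall>h hs. h \<in> heaps \<and> hs \<in> tuples (length L) \<and>
        (\<forall>i<length L. hs ! i \<subseteq>\<^sub>m h \<and> hs ! i \<in> sem1 P (fst (L ! i)) \<eta>) \<longrightarrow>
      (\<exists>i<length L. \<exists>j<length R. hs ! i \<in> sem1 P (fst (R ! j)) \<eta> \<and>
          mult_ge (snd (L ! i)) (snd (R ! j)) (\<Union>c\<in>set L. set (snd c)))
      \<or> (\<exists>j<length R. snd (R ! j) = [] \<and> h \<in> sem1 P (fst (R ! j)) \<eta>))"

end

theory Submission
  imports Defs "HOL-Library.Multiset"
begin

definition hstar :: "heap set \<Rightarrow> heap set \<Rightarrow> heap set" where
  "hstar A B = {f ++ g | f g. f \<in> A \<and> g \<in> B \<and> dom f \<inter> dom g = {}}"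

definition upclosed :: "heap set \<Rightarrow> bool" where
  "upclosed A \<longleftrightarrow> A \<subseteq> heaps \<and> (\<forall>f\<in>A. \<forall>h\<in>heaps. f \<subseteq>\<^sub>m h \<longrightarrow> h \<in> A)"

fun S :: "('p \<Rightarrow> ('v \<Rightarrow> int) \<Rightarrow> heap set) \<Rightarrow> ('p, 'v, 'a) assn \<Rightarrow> ('v \<Rightarrow> int) \<Rightarrow> heap set" where
  "S P (Prim p) \<eta> = {h\<in>heaps. \<exists>f\<in>P p \<eta>. f \<subseteq>\<^sub>m h}"
| "S P (AV a) \<eta> = {}"
| "S P TT \<eta> = heaps"
| "S P FF \<eta> = {}"
| "S P (Conj x y) \<eta> = S P x \<eta> \<inter> S P y \<eta>"
| "S P (Disj x y) \<eta> = S P x \<eta> \<union> S P y \<eta>"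
| "S P (Star x y) \<eta> = hstar (S P x \<eta>) (S P y \<eta>)"
| "S P (Ex v x) \<eta> = (\<Union>k. S P x (\<eta>(v := k)))"
| "S P (All v x) \<eta> = heaps \<inter> (\<Inter>k. S P x (\<eta>(v := k)))"

lemma heaps_add: "f \<in> heaps \<Longrightarrow> g \<in> heaps \<Longrightarrow> f ++ g \<in> heaps"
  by (auto simp: heaps_def)

lemma heaps_restrict: "h \<in> heaps \<Longrightarrow> h |` X \<in> heaps"
  by (auto simp: heaps_def intro: finite_subset)

lemma heaps_le: "f \<subseteq>\<^sub>m h \<Longrightarrow> h \<in> heaps \<Longrightarrow> f \<in> heaps"
  by (auto simp: heaps_def dest!: map_le_implies_dom_le intro: finite_subset)

lemma add_restrict: "f \<subseteq>\<^sub>m h \<Longrightarrow> f ++ (h |` (- dom f)) = h"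
  apply (rule ext)
  apply (auto simp: map_le_def map_add_def restrict_map_def split: option.splits)
  done

lemma le_add_left: "x \<subseteq>\<^sub>m h \<Longrightarrow> y \<subseteq>\<^sub>m h \<Longrightarrow> x \<subseteq>\<^sub>m x ++ y"
  unfolding map_le_def map_add_def by (auto split: option.splits) (metis domI)

lemma le_add_disj: "dom f \<inter> dom g = {} \<Longrightarrow> f \<subseteq>\<^sub>m f ++ g"
  by (metis map_add_comm map_le_map_add)

lemma le_add_mono: "x \<subseteq>\<^sub>m f \<Longrightarrow> y \<subseteq>\<^sub>m g \<Longrightarrow> dom f \<inter> dom g = {} \<Longrightarrow> x ++ y \<subseteq>\<^sub>m f ++ g"
proof -
  assume a: "x \<subseteq>\<^sub>m f" "y \<subseteq>\<^sub>m g" "dom f \<inter> dom g = {}"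
  have "y \<subseteq>\<^sub>m f ++ g" using a(2) map_le_map_add map_le_trans by blast
  moreover have "x \<subseteq>\<^sub>m f ++ g" using a(1) le_add_disj[OF a(3)] map_le_trans by blast
  ultimately show ?thesis by (simp add: map_add_le_mapI)
qed

lemma upclosed_hstar: "upclosed A \<Longrightarrow> upclosed B \<Longrightarrow> upclosed (hstar A B)"
proof -
  assume A: "upclosed A" and B: "upclosed B"
  show ?thesis unfolding upclosed_def
  proof (intro conjI ballI impI)
    show "hstar A B \<subseteq> heaps" using A B by (auto simp: upclosed_def hstar_def intro!: heaps_add)
  next
    fix z h assume z: "z \<in> hstar A B" and h: "h \<in> heaps" and le: "z \<subseteq>\<^sub>m h"
    then obtain f g where fg: "z = f ++ g" "f \<in> A" "g \<in> B" "dom f \<inter> dom g = {}"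
      by (auto simp: hstar_def)
    have fh: "f \<subseteq>\<^sub>m h" using le fg le_add_disj map_le_trans by metis
    have gh: "g \<subseteq>\<^sub>m h" using le fg map_le_map_add map_le_trans by metis
    define g' where "g' = h |` (- dom f)"
    have "g \<subseteq>\<^sub>m g'" using gh fg(4) unfolding g'_def
      by (auto simp: map_le_def restrict_map_def)
    moreover have "g' \<in> heaps" using h by (simp add: g'_def heaps_restrict)
    ultimately have "g' \<in> B" using B fg(3) by (auto simp: upclosed_def)
    moreover have "f ++ g' = h" using add_restrict[OF fh] by (simp add: g'_def)
    moreover have "dom f \<inter> dom g' = {}" by (auto simp: g'_def)
    ultimately show "h \<in> hstar A B" using fg(2) by (auto simp: hstar_def)
  qed
qed

lemma S_up: "avfree \<phi> \<Longrightarrow> upclosed (S P \<phi> \<eta>)"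
proof (induction \<phi> arbitrary: \<eta>)
  case (Prim p) then show ?case by (auto simp: upclosed_def intro: map_le_trans)
next
  case (AV a) then show ?case by simp
next
  case TT then show ?case by (simp add: upclosed_def)
next
  case FF then show ?case by (simp add: upclosed_def)
next
  case (Conj x y)
  then have "upclosed (S P x \<eta>)" "upclosed (S P y \<eta>)" by auto
  then show ?case unfolding upclosed_def S.simps by blast
next
  case (Disj x y)
  then have "upclosed (S P x \<eta>)" "upclosed (S P y \<eta>)" by auto
  then show ?case unfolding upclosed_def S.simps by blast
next
  case (Star x y) then show ?case by (simp add: upclosed_hstar)
next
  case (Ex v x)
  have u: "\<And>\<eta>'. upclosed (S P x \<eta>')" using Ex by simp
  show ?case unfolding upclosed_def
  proof (intro conjI ballI impI)
    show "S P (assn.Ex v x) \<eta> \<subseteq> heaps" using u unfolding upclosed_def by auto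
  next
    fix f h assume f: "f \<in> S P (assn.Ex v x) \<eta>" and h: "h \<in> heaps" and le: "f \<subseteq>\<^sub>m h"
    then obtain k where "f \<in> S P x (\<eta>(v := k))" by auto
    then have "h \<in> S P x (\<eta>(v := k))"
      using u[of "\<eta>(v := k)"] h le unfolding upclosed_def by auto
    then show "h \<in> S P (assn.Ex v x) \<eta>" by auto
  qed
next
  case (All v x)
  have u: "\<And>\<eta>'. upclosed (S P x \<eta>')" using All by simp
  show ?case unfolding upclosed_def
  proof (intro conjI ballI impI)
    show "S P (assn.All v x) \<eta> \<subseteq> heaps" by simp
  next
    fix f h assume f: "f \<in> S P (assn.All v x) \<eta>" and h: "h \<in> heaps" and le: "f \<subseteq>\<^sub>m h"
    have "h \<in> S P x (\<eta>(v := k))" for k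
      using u[of "\<eta>(v := k)"] f h le unfolding upclosed_def by auto
    then show "h \<in> S P (assn.All v x) \<eta>" using h by simp
  qed
qed


lemma tuples_nth: "hs \<in> tuples n \<longleftrightarrow> length hs = n \<and> (\<forall>k<n. hs ! k \<in> heaps)"
  by (auto simp: tuples_def subset_code(1) all_set_conv_all_nth)

lemma Delta_nth: "hs \<in> Delta n X \<longleftrightarrow> hs \<in> tuples n \<and> (\<exists>f\<in>X. \<forall>k<length hs. f \<subseteq>\<^sub>m hs ! k)"
  by (auto simp: Delta_def all_set_conv_all_nth)

lemma Delta_sub: "Delta n X \<subseteq> tuples n" by (auto simp: Delta_def)

lemma delta_prim: "X \<subseteq> heaps \<Longrightarrow> Delta n X = Delta n {h\<in>heaps. \<exists>f\<in>X. f \<subseteq>\<^sub>m h}"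
  unfolding Delta_def by (auto intro: map_le_trans) (meson map_le_refl subsetD)

lemma empty_heap: "Map.empty \<in> heaps" by (simp add: heaps_def)

lemma delta_TT: "tuples n = Delta n heaps"
  unfolding Delta_def using empty_heap by (auto intro!: bexI[of _ Map.empty])

lemma delta_conj:
  assumes A: "upclosed A" and B: "upclosed B" and n: "n \<ge> 1"
  shows "Delta n A \<inter> Delta n B = Delta n (A \<inter> B)"
proof
  show "Delta n (A \<inter> B) \<subseteq> Delta n A \<inter> Delta n B" by (auto simp: Delta_def)
next
  show "Delta n A \<inter> Delta n B \<subseteq> Delta n (A \<inter> B)"
  proof
    fix hs assume hs: "hs \<in> Delta n A \<inter> Delta n B"
    then obtain x y where x: "x \<in> A" "\<forall>h\<in>set hs. x \<subseteq>\<^sub>m h" and y: "y \<in> B" "\<forall>h\<in>set hs. y \<subseteq>\<^sub>m h"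
      and t: "hs \<in> tuples n" by (auto simp: Delta_def)
    have "hs ! 0 \<in> set hs" using t n by (auto simp: tuples_def)
    then have x0: "x \<subseteq>\<^sub>m hs ! 0" and y0: "y \<subseteq>\<^sub>m hs ! 0" and h0: "hs ! 0 \<in> heaps"
      using x y t by (auto simp: tuples_def)
    have zh: "\<forall>h\<in>set hs. x ++ y \<subseteq>\<^sub>m h" using x y by (simp add: map_add_le_mapI)
    have zheap: "x ++ y \<in> heaps" using heaps_le[OF _ h0] x0 y0 map_add_le_mapI by blast
    have "x ++ y \<in> A" using A x(1) zheap le_add_left[OF x0 y0] unfolding upclosed_def by blast
    moreover have "x ++ y \<in> B" using B y(1) zheap map_le_map_add unfolding upclosed_def by blast
    ultimately show "hs \<in> Delta n (A \<inter> B)" using t zh by (auto simp: Delta_def)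
  qed
qed

lemma delta_all:
  assumes A: "\<And>k. upclosed (A k)" and n: "n \<ge> 1"
  shows "(\<Inter>k. Delta n (A k)) = Delta n (heaps \<inter> (\<Inter>k. A k))"
proof
  show "Delta n (heaps \<inter> (\<Inter>k. A k)) \<subseteq> (\<Inter>k. Delta n (A k))" by (auto simp: Delta_def)
next
  show "(\<Inter>k. Delta n (A k)) \<subseteq> Delta n (heaps \<inter> (\<Inter>k. A k))"
  proof
    fix hs assume hs: "hs \<in> (\<Inter>k. Delta n (A k))"
    then have t: "hs \<in> tuples n" by (auto simp: Delta_def)
    have "\<forall>k. \<exists>e. e \<in> A k \<and> (\<forall>h\<in>set hs. e \<subseteq>\<^sub>m h)" using hs by (auto simp: Delta_def)
    then obtain e where e: "\<And>k. e k \<in> A k" "\<And>k h. h \<in> set hs \<Longrightarrow> e k \<subseteq>\<^sub>m h" by metis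
    have h0s: "hs ! 0 \<in> set hs" using t n by (auto simp: tuples_def)
    then have h0: "hs ! 0 \<in> heaps" using t by (auto simp: tuples_def)
    define z where "z = (hs ! 0) |` (\<Union>k. dom (e k))"
    have zheap: "z \<in> heaps" using h0 by (simp add: z_def heaps_restrict)
    have ez: "e k \<subseteq>\<^sub>m z" for k
      using e(2)[OF h0s, of k] unfolding z_def map_le_def restrict_map_def by auto
    have zh: "z \<subseteq>\<^sub>m h" if "h \<in> set hs" for h
    proof (unfold map_le_def, intro ballI)
      fix a assume "a \<in> dom z"
      then obtain k where a: "a \<in> dom (e k)" by (auto simp: z_def split: if_splits)
      then have "z a = e k a" using ez[of k] by (auto simp: map_le_def)
      also have "\<dots> = h a" using e(2)[OF that, of k] a by (auto simp: map_le_def)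
      finally show "z a = h a" .
    qed
    have "z \<in> A k" for k using A[of k] e(1)[of k] zheap ez[of k] unfolding upclosed_def by blast
    then show "hs \<in> Delta n (heaps \<inter> (\<Inter>k. A k))" using t zh zheap by (auto simp: Delta_def)
  qed
qed


lemma map2_nth: "k < length xs \<Longrightarrow> k < length ys \<Longrightarrow> map2 f xs ys ! k = f (xs ! k) (ys ! k)"
  by simp

lemma delta_star:
  assumes A: "upclosed A" and B: "upclosed B" and n: "n \<ge> 1"
  shows "sepstar (Delta n A) (Delta n B) = Delta n (hstar A B)"
proof
  show "sepstar (Delta n A) (Delta n B) \<subseteq> Delta n (hstar A B)"
  proof
    fix hs assume "hs \<in> sepstar (Delta n A) (Delta n B)"
    then obtain fs gs where hs: "hs = map2 (++) fs gs" and fs: "fs \<in> Delta n A" and gs: "gs \<in> Delta n B"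
      and d: "list_all2 (\<lambda>f g. dom f \<inter> dom g = {}) fs gs" unfolding sepstar_def by blast
    from fs obtain x where x: "x \<in> A" "\<forall>k<length fs. x \<subseteq>\<^sub>m fs ! k" and tf: "fs \<in> tuples n"
      by (auto simp: Delta_nth)
    from gs obtain y where y: "y \<in> B" "\<forall>k<length gs. y \<subseteq>\<^sub>m gs ! k" and tg: "gs \<in> tuples n"
      by (auto simp: Delta_nth)
    have lf: "length fs = n" and lg: "length gs = n" using tf tg by (auto simp: tuples_nth)
    have dk: "dom (fs ! k) \<inter> dom (gs ! k) = {}" if "k < n" for k
      using d that lf by (auto simp: list_all2_conv_all_nth)
    have "x \<subseteq>\<^sub>m fs ! 0" using x(2) n lf by auto
    then have "dom x \<subseteq> dom (fs ! 0)" by (rule map_le_implies_dom_le)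
    moreover have "y \<subseteq>\<^sub>m gs ! 0" using y(2) n lg by auto
    then have "dom y \<subseteq> dom (gs ! 0)" by (rule map_le_implies_dom_le)
    moreover have "dom (fs ! 0) \<inter> dom (gs ! 0) = {}" using dk[of 0] n by simp
    ultimately have "dom x \<inter> dom y = {}" by blast
    then have xy: "x ++ y \<in> hstar A B" using x y by (auto simp: hstar_def)
    have lh: "length hs = n" using hs lf lg by simp
    have "\<forall>k<n. hs ! k \<in> heaps"
    proof (intro allI impI)
      fix k assume k: "k < n"
      then have "fs ! k \<in> heaps" "gs ! k \<in> heaps" using tf tg by (auto simp: tuples_nth)
      then show "hs ! k \<in> heaps" using k hs lf lg by (simp add: heaps_add)
    qed
    then have th: "hs \<in> tuples n" using lh by (simp add: tuples_nth)
    have "\<forall>k<length hs. x ++ y \<subseteq>\<^sub>m hs ! k"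
    proof (intro allI impI)
      fix k assume k: "k < length hs"
      then have "x ++ y \<subseteq>\<^sub>m fs ! k ++ (gs ! k)"
        using le_add_mono[of x "fs ! k" y "gs ! k"] lf lg lh x(2) y(2) dk[of k] by simp
      then show "x ++ y \<subseteq>\<^sub>m hs ! k" using k lf lg hs by simp
    qed
    then show "hs \<in> Delta n (hstar A B)" using th xy by (auto simp: Delta_nth)
  qed
next
  show "Delta n (hstar A B) \<subseteq> sepstar (Delta n A) (Delta n B)"
  proof
    fix hs assume "hs \<in> Delta n (hstar A B)"
    then obtain z where th: "hs \<in> tuples n" and z: "z \<in> hstar A B" and zh: "\<forall>k<length hs. z \<subseteq>\<^sub>m hs ! k"
      by (auto simp: Delta_nth)
    from z obtain x y where xy: "z = x ++ y" "x \<in> A" "y \<in> B" "dom x \<inter> dom y = {}"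
      by (auto simp: hstar_def)
    have lh: "length hs = n" and hh: "\<forall>k<n. hs ! k \<in> heaps" using th by (auto simp: tuples_nth)
    have xh: "x \<subseteq>\<^sub>m hs ! k" if "k < n" for k
      using map_le_trans[OF le_add_disj[OF xy(4)]] zh lh that xy(1) by auto
    have yh: "y \<subseteq>\<^sub>m hs ! k" if "k < n" for k
      using map_le_trans[OF map_le_map_add] zh lh that xy(1) by auto
    define fs where "fs = replicate n x"
    define gs where "gs = map (\<lambda>h. h |` (- dom x)) hs"
    have xheap: "x \<in> heaps" using A xy(2) by (auto simp: upclosed_def)
    have "fs \<in> Delta n A" using xheap xy(2) by (auto simp: Delta_nth tuples_nth fs_def intro!: bexI[of _ x])
    moreover have "gs \<in> Delta n B"
    proof -
      have "gs \<in> tuples n" using lh hh by (auto simp: tuples_nth gs_def heaps_restrict)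
      moreover have "\<forall>k<length gs. y \<subseteq>\<^sub>m gs ! k"
        using yh xy(4) lh by (auto simp: gs_def map_le_def restrict_map_def)
      ultimately show ?thesis using xy(3) by (auto simp: Delta_nth)
    qed
    moreover have "list_all2 (\<lambda>f g. dom f \<inter> dom g = {}) fs gs"
      using lh by (auto simp: list_all2_conv_all_nth fs_def gs_def)
    moreover have "hs = map2 (++) fs gs"
      by (rule nth_equalityI) (auto simp: fs_def gs_def lh add_restrict xh)
    ultimately show "hs \<in> sepstar (Delta n A) (Delta n B)" unfolding sepstar_def by blast
  qed
qed

lemma delta_ex: "(\<Union>k. Delta n (A k)) = Delta n (\<Union>k. A k)"
  by (auto simp: Delta_def)

lemma sem_S:
  assumes P: "\<forall>p \<eta>'. P p \<eta>' \<subseteq> heaps" and n: "n \<ge> 1"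
  shows "avfree \<phi> \<Longrightarrow> sem P n \<phi> \<eta> \<rho> = Delta n (S P \<phi> \<eta>)"
proof (induction \<phi> arbitrary: \<eta>)
  case (Prim p)
  have "P p \<eta> \<subseteq> heaps" using P by auto
  then show ?case unfolding S.simps sem.simps by (rule delta_prim)
next
  case TT then show ?case by (simp add: delta_TT)
next
  case FF then show ?case by (simp add: Delta_def)
next
  case (Conj x y)
  then have a: "avfree x" "avfree y" by auto
  then show ?case using Conj.IH(1)[OF a(1)] Conj.IH(2)[OF a(2)] delta_conj[OF S_up[OF a(1)] S_up[OF a(2)] n] by simp
next
  case (Disj x y) then show ?case by (auto simp: Delta_def)
next
  case (Star x y)
  then have a: "avfree x" "avfree y" by auto
  then show ?case using Star.IH(1)[OF a(1)] Star.IH(2)[OF a(2)] delta_star[OF S_up[OF a(1)] S_up[OF a(2)] n] by simp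
next
  case (Ex v x) then show ?case using delta_ex by simp
next
  case (All v x) then show ?case using delta_all[OF S_up n] by simp
next
  case (AV a) then show ?case by simp
qed

lemma sem1_S:
  assumes P: "\<forall>p \<eta>'. P p \<eta>' \<subseteq> heaps" and av: "avfree \<phi>"
  shows "sem1 P \<phi> \<eta> = S P \<phi> \<eta>"
proof -
  have "sem1 P \<phi> \<eta> = {h. [h] \<in> Delta 1 (S P \<phi> \<eta>)}"
    unfolding sem1_def using sem_S[OF P _ av] by simp
  also have "\<dots> = S P \<phi> \<eta>"
  proof -
    have u: "S P \<phi> \<eta> \<subseteq> heaps" "\<forall>f\<in>S P \<phi> \<eta>. \<forall>h\<in>heaps. f \<subseteq>\<^sub>m h \<longrightarrow> h \<in> S P \<phi> \<eta>"
      using S_up[OF av, of P \<eta>] unfolding upclosed_def by auto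
    have iff: "[h] \<in> Delta 1 X \<longleftrightarrow> h \<in> heaps \<and> (\<exists>f\<in>X. f \<subseteq>\<^sub>m h)" for h X
      by (simp add: Delta_def tuples_def)
    show ?thesis
    proof (rule set_eqI)
      fix h
      show "h \<in> {h. [h] \<in> Delta 1 (S P \<phi> \<eta>)} \<longleftrightarrow> h \<in> S P \<phi> \<eta>"
      proof
        assume "h \<in> {h. [h] \<in> Delta 1 (S P \<phi> \<eta>)}"
        then obtain f where "h \<in> heaps" "f \<in> S P \<phi> \<eta>" "f \<subseteq>\<^sub>m h" using iff[of h "S P \<phi> \<eta>"] by auto
        then show "h \<in> S P \<phi> \<eta>" using u(2) by blast
      next
        assume "h \<in> S P \<phi> \<eta>"
        then show "h \<in> {h. [h] \<in> Delta 1 (S P \<phi> \<eta>)}"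
          unfolding mem_Collect_eq iff[of h "S P \<phi> \<eta>"] using u(1) map_le_refl by blast
      qed
    qed
  qed
  finally show ?thesis .
qed


definition F :: "('a \<Rightarrow> heap list set) \<Rightarrow> heap list set \<Rightarrow> 'a list \<Rightarrow> heap list set" where
  "F \<rho> X as = foldl (\<lambda>X a. sepstar X (\<rho> a)) X as"

lemma sepstar_mono: "X \<subseteq> Y \<Longrightarrow> sepstar X R \<subseteq> sepstar Y R"
  unfolding sepstar_def by blast

lemma F_mono: "X \<subseteq> Y \<Longrightarrow> F \<rho> X as \<subseteq> F \<rho> Y as"
  unfolding F_def by (induction as arbitrary: X Y) (auto dest: sepstar_mono)

lemma sepstar_UN: "sepstar (\<Union>i\<in>I. X i) R = (\<Union>i\<in>I. sepstar (X i) R)"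
  unfolding sepstar_def by blast

lemma F_UN: "F \<rho> (\<Union>i\<in>I. X i) as = (\<Union>i\<in>I. F \<rho> (X i) as)"
  unfolding F_def by (induction as arbitrary: X) (simp_all add: sepstar_UN)

lemma F_append: "F \<rho> X (as @ bs) = F \<rho> (F \<rho> X as) bs"
  by (simp add: F_def)

lemma sepstar_swap_sub: "sepstar (sepstar X R1) R2 \<subseteq> sepstar (sepstar X R2) R1"
proof
  fix hs assume "hs \<in> sepstar (sepstar X R1) R2"
  then obtain us ks where hs: "hs = map2 (++) us ks" and us: "us \<in> sepstar X R1" and ks: "ks \<in> R2"
    and d1: "list_all2 (\<lambda>f g. dom f \<inter> dom g = {}) us ks" unfolding sepstar_def by blast
  from us obtain fs gs where us': "us = map2 (++) fs gs" and fs: "fs \<in> X" and gs: "gs \<in> R1"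
    and d2: "list_all2 (\<lambda>f g. dom f \<inter> dom g = {}) fs gs" unfolding sepstar_def by blast
  have l: "length gs = length fs" "length us = length fs" "length ks = length fs"
  proof -
    have "length gs = length fs" using d2 by (simp add: list_all2_lengthD)
    moreover have "length ks = length us" using d1 by (simp add: list_all2_lengthD)
    ultimately show "length gs = length fs" "length us = length fs" "length ks = length fs"
      using us' by simp_all
  qed
  have dfg: "dom ((fs ! k)) \<inter> dom ((gs ! k)) = {}" if "k < length fs" for k
    using d2 that by (auto simp: list_all2_conv_all_nth)
  have duk: "dom ((fs ! k) ++ (gs ! k)) \<inter> dom ((ks ! k)) = {}" if "k < length fs" for k
    using d1 that l us' by (auto simp: list_all2_conv_all_nth)
  define vs where "vs = map2 (++) fs ks"
  have "vs \<in> sepstar X R2"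
  proof -
    have "list_all2 (\<lambda>f g. dom f \<inter> dom g = {}) fs ks"
      using duk l by (auto simp: list_all2_conv_all_nth)
    then show ?thesis using fs ks unfolding sepstar_def vs_def by blast
  qed
  moreover have "list_all2 (\<lambda>f g. dom f \<inter> dom g = {}) vs gs"
  proof -
    have "dom ((fs ! k) ++ (ks ! k)) \<inter> dom (gs ! k) = {}" if "k < length fs" for k
      using duk[OF that] dfg[OF that] by auto
    then show ?thesis using l by (auto simp: list_all2_conv_all_nth vs_def)
  qed
  moreover have "hs = map2 (++) vs gs"
  proof (rule nth_equalityI)
    show "length hs = length (map2 (++) vs gs)" using hs l vs_def by simp
  next
    fix k assume "k < length hs"
    then have k: "k < length fs" using hs l by simp
    have "dom ((gs ! k)) \<inter> dom ((ks ! k)) = {}" using duk[OF k] by auto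
    then have "(fs ! k) ++ (gs ! k) ++ (ks ! k) = (fs ! k) ++ (ks ! k) ++ (gs ! k)"
      by (metis map_add_assoc map_add_comm)
    then show "hs ! k = (map2 (++) vs gs) ! k" using k l hs us' by (simp add: vs_def)
  qed
  ultimately show "hs \<in> sepstar (sepstar X R2) R1" using gs unfolding sepstar_def by blast
qed

lemma sepstar_swap: "sepstar (sepstar X R1) R2 = sepstar (sepstar X R2) R1"
  by (rule antisym) (rule sepstar_swap_sub)+

lemma F_perm: "mset as = mset bs \<Longrightarrow> F \<rho> X as = F \<rho> X bs"
  unfolding F_def foldl_conv_fold
  by (rule fun_cong[where x = X], rule fold_multiset_equiv) (auto simp: sepstar_swap)

lemma sepstar_delta: "R \<subseteq> tuples n \<Longrightarrow> sepstar (Delta n {e}) R \<subseteq> Delta n {e}"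
proof
  fix hs assume R: "R \<subseteq> tuples n" and "hs \<in> sepstar (Delta n {e}) R"
  then obtain fs gs where hs: "hs = map2 (++) fs gs" and fs: "fs \<in> Delta n {e}" and gs: "gs \<in> R"
    and d: "list_all2 (\<lambda>f g. dom f \<inter> dom g = {}) fs gs" unfolding sepstar_def by blast
  have tf: "fs \<in> tuples n" and ef: "\<forall>k<length fs. e \<subseteq>\<^sub>m fs ! k" using fs by (auto simp: Delta_nth)
  have tg: "gs \<in> tuples n" using gs R by auto
  have l: "length fs = n" "length gs = n" using tf tg by (auto simp: tuples_nth)
  have "\<forall>k<n. hs ! k \<in> heaps \<and> e \<subseteq>\<^sub>m hs ! k"
  proof (intro allI impI)
    fix k assume k: "k < n"
    have "fs ! k \<in> heaps" "gs ! k \<in> heaps" using tf tg k by (auto simp: tuples_nth)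
    moreover have "dom (fs ! k) \<inter> dom (gs ! k) = {}" using d k l by (auto simp: list_all2_conv_all_nth)
    moreover have "e \<subseteq>\<^sub>m fs ! k" using ef k l by auto
    ultimately show "hs ! k \<in> heaps \<and> e \<subseteq>\<^sub>m hs ! k"
      using k l hs by (auto simp: heaps_add intro: map_le_trans[OF _ le_add_disj])
  qed
  then show "hs \<in> Delta n {e}" using hs l by (auto simp: Delta_nth tuples_nth)
qed

lemma F_delta: "(\<forall>a. \<rho> a \<subseteq> tuples n) \<Longrightarrow> F \<rho> (Delta n {e}) as \<subseteq> Delta n {e}"
proof (induction as)
  case Nil then show ?case by (simp add: F_def)
next
  case (Cons a as)
  have "F \<rho> (Delta n {e}) (a # as) = F \<rho> (sepstar (Delta n {e}) (\<rho> a)) as" by (simp add: F_def)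
  also have "\<dots> \<subseteq> F \<rho> (Delta n {e}) as" using Cons.prems by (intro F_mono sepstar_delta) auto
  also have "\<dots> \<subseteq> Delta n {e}" using Cons by auto
  finally show ?case .
qed

lemma sem_foldl: "sem P n (foldl (\<lambda>x a. Star x (AV a)) \<phi> as) \<eta> \<rho> = F \<rho> (sem P n \<phi> \<eta> \<rho>) as"
  by (induction as arbitrary: \<phi>) (simp_all add: F_def)

lemma sem_starred: "sem P n (starred c) \<eta> \<rho> = F \<rho> (sem P n (fst c) \<eta> \<rho>) (snd c)"
  by (simp add: starred_def sem_foldl)

lemma sem_conjs: "xs \<noteq> [] \<Longrightarrow> x \<in> set xs \<Longrightarrow> sem P n (conjs xs) \<eta> \<rho> \<subseteq> sem P n x \<eta> \<rho>"
  by (induction xs rule: conjs.induct) auto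

lemma sem_disjs: "x \<in> set xs \<Longrightarrow> sem P n x \<eta> \<rho> \<subseteq> sem P n (disjs xs) \<eta> \<rho>"
  by (induction xs rule: disjs.induct) auto


lemma mult_ge_mset:
  assumes "mult_ge as bs V" "set bs \<subseteq> V"
  shows "mset bs \<subseteq># mset as"
proof (rule mset_subset_eqI)
  fix c
  show "count (mset bs) c \<le> count (mset as) c"
  proof (cases "c \<in> V")
    case True then show ?thesis using assms(1) by (simp add: mult_ge_def count_mset)
  next
    case False then have "c \<notin> set bs" using assms(2) by auto
    then show ?thesis by (simp add: count_mset count_list_0_iff)
  qed
qed

theorem mainTheorem4:
  fixes P :: "'p \<Rightarrow> ('v \<Rightarrow> int) \<Rightarrow> heap set"
    and L R :: "(('p, 'v, 'a) assn \<times> 'a list) list"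
    and \<eta> :: "'v \<Rightarrow> int"
  assumes "\<forall>p \<eta>'. P p \<eta>' \<subseteq> heaps"
    and "canonical L R"
    and "PC P L R \<eta>"
  shows "valid P 2 (conjs (map starred L)) (disjs (map starred R)) \<eta>"
  unfolding valid_def
proof (intro allI impI subsetI)
  note P = assms(1)
  fix \<rho> :: "'a \<Rightarrow> heap list set" and hs
  assume \<rho>: "\<forall>a. \<rho> a \<in> IRel 2"
  assume hs: "hs \<in> sem P 2 (conjs (map starred L)) \<eta> \<rho>"
  have \<rho>t: "\<forall>a. \<rho> a \<subseteq> tuples 2" using \<rho> by (auto simp: IRel_def)
  have Lne: "L \<noteq> []" and avL: "\<forall>c\<in>set L. avfree (fst c)"
    and avR: "\<forall>d\<in>set R. avfree (fst d) \<and> set (snd d) \<subseteq> (\<Union>c\<in>set L. set (snd c))"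
    using assms(2) by (auto simp: canonical_def)
  have two: "(2::nat) \<ge> 1" by simp
  have "\<exists>e. e \<in> S P (fst (L ! i)) \<eta> \<and> hs \<in> F \<rho> (Delta 2 {e}) (snd (L ! i))" if i: "i < length L" for i
  proof -
    have av: "avfree (fst (L ! i))" using avL nth_mem[OF i] by blast
    have "hs \<in> sem P 2 (starred (L ! i)) \<eta> \<rho>"
      using sem_conjs[of "map starred L" "starred (L ! i)" P 2 \<eta> \<rho>] hs Lne i by auto
    also have "\<dots> = F \<rho> (Delta 2 (S P (fst (L ! i)) \<eta>)) (snd (L ! i))"
      using sem_S[OF P two av] by (simp only: sem_starred)
    also have "Delta 2 (S P (fst (L ! i)) \<eta>) = (\<Union>e\<in>S P (fst (L ! i)) \<eta>. Delta 2 {e})"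
      by (auto simp: Delta_def)
    finally show ?thesis by (simp add: F_UN) blast
  qed
  then obtain e where e: "\<And>i. i < length L \<Longrightarrow> e i \<in> S P (fst (L ! i)) \<eta> \<and> hs \<in> F \<rho> (Delta 2 {e i}) (snd (L ! i))"
    by metis
  have eD: "hs \<in> Delta 2 {e i}" if "i < length L" for i
    using F_delta[OF \<rho>t] e[OF that] by blast
  have th: "hs \<in> tuples 2" using eD[of 0] Lne by (auto simp: Delta_def)
  have eh: "e i \<subseteq>\<^sub>m h" if "i < length L" "h \<in> set hs" for i h
    using eD[OF that(1)] that(2) by (auto simp: Delta_def)
  have eheap: "e i \<in> heaps" if "i < length L" for i
    using e[OF that] S_up[of "fst (L ! i)" P \<eta>] avL that by (auto simp: upclosed_def)
  have h0s: "hs ! 0 \<in> set hs" using th by (auto simp: tuples_def)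
  then have h0: "hs ! 0 \<in> heaps" using th by (auto simp: tuples_def)
  define E where "E = (hs ! 0) |` (\<Union>i<length L. dom (e i))"
  have Eheap: "E \<in> heaps" using h0 by (simp add: E_def heaps_restrict)
  have eE: "e i \<subseteq>\<^sub>m E" if "i < length L" for i
    using eh[OF that h0s] that unfolding E_def map_le_def restrict_map_def by auto
  have Eh: "E \<subseteq>\<^sub>m h" if "h \<in> set hs" for h
  proof (unfold map_le_def, intro ballI)
    fix a assume "a \<in> dom E"
    then obtain i where i: "i < length L" and a: "a \<in> dom (e i)" by (auto simp: E_def split: if_splits)
    then have "E a = e i a" using eE[OF i] by (auto simp: map_le_def)
    also have "\<dots> = h a" using eh[OF i that] a by (auto simp: map_le_def)
    finally show "E a = h a" .
  qed
  define es where "es = map e [0..<length L]"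
  have es_t: "es \<in> tuples (length L)" using eheap by (auto simp: tuples_nth es_def)
  have es_c: "\<forall>i<length L. es ! i \<subseteq>\<^sub>m E \<and> es ! i \<in> sem1 P (fst (L ! i)) \<eta>"
  proof (intro allI impI conjI)
    fix i assume i: "i < length L"
    have av: "avfree (fst (L ! i))" using avL nth_mem[OF i] by blast
    show "es ! i \<subseteq>\<^sub>m E" using eE[OF i] i by (simp add: es_def)
    show "es ! i \<in> sem1 P (fst (L ! i)) \<eta>" using e[OF i] i sem1_S[OF P av] by (simp add: es_def)
  qed
  from assms(3) Eheap es_t es_c
  have pc: "(\<exists>i<length L. \<exists>j<length R. es ! i \<in> sem1 P (fst (R ! j)) \<eta> \<and>
          mult_ge (snd (L ! i)) (snd (R ! j)) (\<Union>c\<in>set L. set (snd c)))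
      \<or> (\<exists>j<length R. snd (R ! j) = [] \<and> E \<in> sem1 P (fst (R ! j)) \<eta>)"
    unfolding PC_def by blast
  show "hs \<in> sem P 2 (disjs (map starred R)) \<eta> \<rho>"
    using pc
  proof (elim disjE exE conjE)
    fix i j assume i: "i < length L" and j: "j < length R"
      and ej: "es ! i \<in> sem1 P (fst (R ! j)) \<eta>"
      and mg: "mult_ge (snd (L ! i)) (snd (R ! j)) (\<Union>c\<in>set L. set (snd c))"
    have Rj: "avfree (fst (R ! j))" "set (snd (R ! j)) \<subseteq> (\<Union>c\<in>set L. set (snd c))"
      using avR j by (auto simp: nth_mem)
    have eS: "e i \<in> S P (fst (R ! j)) \<eta>" using ej i sem1_S[OF P Rj(1)] by (simp add: es_def)
    define as where "as = snd (L ! i)"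
    define bs where "bs = snd (R ! j)"
    have sub: "mset bs \<subseteq># mset as" using mult_ge_mset[OF mg Rj(2)] by (simp add: as_def bs_def)
    obtain cs where cs: "mset cs = mset as - mset bs" by (metis ex_mset)
    have perm: "mset as = mset (cs @ bs)" using cs sub by (simp add: subset_mset.diff_add)
    have "hs \<in> F \<rho> (Delta 2 {e i}) as" using e[OF i] by (simp add: as_def)
    also have "\<dots> = F \<rho> (F \<rho> (Delta 2 {e i}) cs) bs" using F_perm[OF perm] by (simp add: F_append)
    also have "\<dots> \<subseteq> F \<rho> (Delta 2 (S P (fst (R ! j)) \<eta>)) bs"
    proof (rule F_mono)
      have "F \<rho> (Delta 2 {e i}) cs \<subseteq> Delta 2 {e i}" by (rule F_delta[OF \<rho>t])
      also have "\<dots> \<subseteq> Delta 2 (S P (fst (R ! j)) \<eta>)" using eS by (auto simp: Delta_def)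
      finally show "F \<rho> (Delta 2 {e i}) cs \<subseteq> Delta 2 (S P (fst (R ! j)) \<eta>)" .
    qed
    also have "\<dots> = sem P 2 (starred (R ! j)) \<eta> \<rho>"
      using sem_S[OF P two Rj(1)] by (simp add: bs_def sem_starred)
    also have "\<dots> \<subseteq> sem P 2 (disjs (map starred R)) \<eta> \<rho>"
      by (rule sem_disjs) (use j in simp)
    finally show ?thesis .
  next
    fix j assume j: "j < length R" and nil: "snd (R ! j) = []" and Ej: "E \<in> sem1 P (fst (R ! j)) \<eta>"
    have Rj: "avfree (fst (R ! j))" using avR j by (auto simp: nth_mem)
    have "hs \<in> Delta 2 (S P (fst (R ! j)) \<eta>)"
      using th Eh Ej sem1_S[OF P Rj] by (auto simp: Delta_def)
    also have "\<dots> = sem P 2 (starred (R ! j)) \<eta> \<rho>"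
      using sem_S[OF P two Rj] nil by (simp add: F_def sem_starred)
    also have "\<dots> \<subseteq> sem P 2 (disjs (map starred R)) \<eta> \<rho>"
      by (rule sem_disjs) (use j in simp)
    finally show ?thesis .
  qed
qed

end
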